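(* Let $\mathcal{T}=[0,T_{max}]$, $\mathcal{T}_d,\mathcal{T}_a\subseteq\mathcal{T}$ compact, $\mathcal{X}=[X_{min},X_{max}]$, and $m$ a probability measure on $\mathcal{X}\times\mathcal{T}_a$. For every $G\in\mathbb{R}^+$, the set $\mathcal{P}_{m,G}$ is a closed subset of the space $\mathcal{P}(\mathcal{T}_d\times\mathcal{X})$ of Borel probability measures on $\mathcal{T}_d\times\mathcal{X}$, equipped with the topology of weak convergence of measures.
   Context: $\lambda_2$ denotes Lebesgue measure on $\mathbb{R}^2$. $\mathcal{P}_{m,G}$ is the set of all $F\in\mathcal{P}(\mathcal{T}_d\times\mathcal{X})$ such that (i) $F(B)\le G\,\lambda_2(B)$ for every Borel set $B\subseteq\mathcal{T}_d\times\mathcal{X}$, and (ii) $F(\mathcal{T}_d\times B)=m(B\times\mathcal{T}_a)$ for every Borel set $B\subseteq\mathcal{X}$. *)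

theory Defs
  imports "HOL-Probability.Probability"
begin

definition prob_measures_on :: "(real \<times> real) set \<Rightarrow> (real \<times> real) measure set" where
  "prob_measures_on S =
     {F. prob_space F \<and> space F = S \<and> sets F = sets (restrict_space borel S)}"

definition weak_topology_on :: "(real \<times> real) set \<Rightarrow> (real \<times> real) measure topology" where
  "weak_topology_on S =
     subtopology
       (topology_generated_by
          {{F. (\<integral>z. f z \<partial>F) \<in> U} | f U.
              continuous_on S f \<and> bounded (f ` S) \<and> open (U :: real set)})
       (prob_measures_on S)"

text \<open>The set P_{m,G}: measures F on Td \<times> X with F(B) \<le> G \<lambda>2(B) for Borel B,
  and whose X-marginal equals the X-marginal of m (m lives on X \<times> Ta).\<close>
definition P_mG ::
  "real set \<Rightarrow> real set \<Rightarrow> real set \<Rightarrow> (real \<times> real) measure \<Rightarrow> real \<Rightarrow> (real \<times> real) measure set" where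
  "P_mG Td X Ta m G =
     {F \<in> prob_measures_on (Td \<times> X).
        (\<forall>B \<in> sets borel. B \<subseteq> Td \<times> X \<longrightarrow> emeasure F B \<le> ennreal G * emeasure lborel B) \<and>
        (\<forall>B \<in> sets borel. B \<subseteq> X \<longrightarrow> emeasure F (Td \<times> B) = emeasure m (B \<times> Ta))}"

end

theory Submission
  imports Defs
begin

lemma closed_weak_generic:
  fixes Q :: "((real \<times> real \<Rightarrow> real) \<times> real set) set"
  assumes Q: "\<And>f C. (f,C) \<in> Q \<Longrightarrow> continuous_on S f \<and> bounded (f ` S) \<and> closed C"
  shows "closedin (weak_topology_on S) {F \<in> prob_measures_on S. \<forall>(f,C)\<in>Q. (\<integral>z. f z \<partial>F) \<in> C}"
proof -
  define SS where "SS = {{F. (\<integral>z. f z \<partial>F) \<in> U} | f U.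
              continuous_on S f \<and> bounded (f ` S) \<and> open (U :: real set)}"
  have top: "topspace (topology_generated_by SS) = UNIV"
  proof -
    have "UNIV \<in> SS" unfolding SS_def
      by (rule CollectI, rule exI[where x="\<lambda>_. 0"], rule exI[where x=UNIV]) (auto intro: bounded_subset[of "{0::real}"])
    then show ?thesis by auto
  qed
  have cl: "closedin (topology_generated_by SS) {F. (\<integral>z. f z \<partial>F) \<in> C}" if "(f,C) \<in> Q" for f C
  proof -
    have "{F. (\<integral>z. f z \<partial>F) \<in> - C} \<in> SS" unfolding SS_def using Q[OF that]
      apply (intro CollectI)
      apply (rule_tac x=f in exI)
      apply (rule_tac x="-C" in exI)
      by (auto simp: open_Compl)
    then have "openin (topology_generated_by SS) {F. (\<integral>z. f z \<partial>F) \<in> - C}"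
      by (simp add: openin_topology_generated_by_iff generate_topology_on.Basis)
    moreover have "{F. (\<integral>z. f z \<partial>F) \<in> - C} = topspace (topology_generated_by SS) - {F. (\<integral>z. f z \<partial>F) \<in> C}"
      using top by auto
    ultimately show ?thesis using top by (simp add: closedin_def)
  qed
  define A where "A = \<Inter> (insert UNIV {{F. (\<integral>z. f z \<partial>F) \<in> C} | f C. (f,C) \<in> Q})"
  have "closedin (topology_generated_by SS) A"
    unfolding A_def by (rule closedin_Inter) (use cl top closedin_topspace[of "topology_generated_by SS"] in auto)
  moreover have "{F \<in> prob_measures_on S. \<forall>(f,C)\<in>Q. (\<integral>z. f z \<partial>F) \<in> C} = A \<inter> prob_measures_on S"
    unfolding A_def by auto
  ultimately show ?thesis unfolding weak_topology_on_def SS_def[symmetric]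
    by (auto simp: closedin_subtopology)
qed


lemma meas_cont:
  fixes F :: "(real \<times> real) measure"
  assumes "sets F = sets (restrict_space borel S)" "continuous_on S f"
  shows "f \<in> borel_measurable F"
  using borel_measurable_continuous_on_restrict[OF assms(2)] measurable_cong_sets[OF assms(1) refl] by blast

lemma H1:
  fixes F :: "(real \<times> real) measure" and f :: "real \<times> real \<Rightarrow> real"
  assumes F: "F \<in> prob_measures_on S" and Sb: "S \<in> sets borel" and Sfin: "emeasure lborel S < \<infinity>"
    and le: "\<forall>B \<in> sets borel. B \<subseteq> S \<longrightarrow> emeasure F B \<le> ennreal G * emeasure lborel B"
    and G: "G > 0" and f: "continuous_on S f" and f0: "\<And>z. 0 \<le> f z" and f1: "\<And>z. f z \<le> 1"
  shows "integral\<^sup>L F f \<le> G * integral\<^sup>L (restrict_space lborel S) f"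
proof -
  define L where "L = restrict_space lborel S"
  have Fp: "prob_space F" and spF: "space F = S" and sF: "sets F = sets (restrict_space borel S)"
    using F by (auto simp: prob_measures_on_def)
  interpret prob_space F by fact
  have Sb': "S \<inter> space lborel \<in> sets lborel" using Sb by simp
  have sL: "sets L = sets (restrict_space borel S)" unfolding L_def
    by (simp add: sets_restrict_space)
  have spL: "space L = S" unfolding L_def by (simp add: space_restrict_space)
  have finL: "finite_measure L"
    unfolding L_def by (rule finite_measureI) (use Sfin in \<open>simp add: space_restrict_space emeasure_restrict_space[OF Sb' order_refl]\<close>)
  interpret L: finite_measure L by fact
  have mF: "f \<in> borel_measurable F" by (rule meas_cont[OF sF f])
  have mL: "f \<in> borel_measurable L" by (rule meas_cont[OF sL f])
  have bnd: "norm (f z) \<le> 1" for z using f0[of z] f1[of z] by simp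
  have iF: "integrable F f" by (rule integrable_const_bound[where B=1]) (use bnd mF in auto)
  have iL: "integrable L f" by (rule L.integrable_const_bound[where B=1]) (use bnd mL in auto)
  have eF: "(\<integral>\<^sup>+ z. ennreal (f z) \<partial>F) = ennreal (integral\<^sup>L F f)"
    by (rule nn_integral_eq_integral[OF iF]) (use f0 in auto)
  have eL: "(\<integral>\<^sup>+ z. ennreal (f z) \<partial>L) = ennreal (integral\<^sup>L L f)"
    by (rule nn_integral_eq_integral[OF iL]) (use f0 in auto)
  have leM: "F \<le> scale_measure (ennreal G) L"
  proof -
    have "emeasure F A \<le> emeasure (scale_measure (ennreal G) L) A" for A
    proof (cases "A \<in> sets F")
      case True
      then have AS: "A \<subseteq> S" and Ab: "A \<in> sets borel" using sF Sb by (auto simp: sets_restrict_space_iff)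
      have "emeasure L A = emeasure lborel A" unfolding L_def
        by (rule emeasure_restrict_space[OF Sb' AS])
      then show ?thesis using le AS Ab by simp
    next
      case False
      then show ?thesis by (simp add: emeasure_notin_sets)
    qed
    then show ?thesis
      by (simp add: le_measure_iff space_scale_measure spL spF sL sF le_fun_def)
  qed
  have "ennreal (integral\<^sup>L F f) \<le> (\<integral>\<^sup>+ z. ennreal (f z) \<partial>scale_measure (ennreal G) L)"
    unfolding eF[symmetric] by (rule nn_integral_mono_measure) (use leM sL sF in auto)
  also have "\<dots> = ennreal G * ennreal (integral\<^sup>L L f)"
    using nn_integral_scale_measure[of "\<lambda>z. ennreal (f z)" L "ennreal G"] mL eL by simp
  also have "\<dots> = ennreal (G * integral\<^sup>L L f)" using G by (simp add: ennreal_mult')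
  finally show ?thesis unfolding L_def[symmetric]
    using G integral_nonneg_AE[of f L] f0 by (simp add: ennreal_le_iff)
qed

lemma fK_lim:
  fixes K :: "(real \<times> real) set"
  assumes "closed K" "K \<noteq> {}"
  shows "(\<lambda>n. max 0 (1 - real n * infdist z K)) \<longlonglongrightarrow> indicator K z"
proof (cases "z \<in> K")
  case True
  then show ?thesis by (simp add: infdist_zero)
next
  case False
  define d where "d = infdist z K"
  have d: "d > 0" using infdist_pos_not_in_closed[OF assms False] by (simp add: d_def)
  have "eventually (\<lambda>n. max 0 (1 - real n * d) = 0) sequentially"
    unfolding eventually_sequentially
  proof (intro exI allI impI)
    fix n assume "nat \<lceil>1/d\<rceil> \<le> n"
    then have "1/d \<le> real n" by linarith
    then have "1 \<le> real n * d" using d by (simp add: field_simps)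
    then show "max 0 (1 - real n * d) = 0" by simp
  qed
  then show ?thesis using False unfolding d_def by (simp add: tendsto_eventually)
qed

lemma fK_bounds:
  "0 \<le> max 0 (1 - real n * infdist z K)" "max 0 (1 - real n * infdist z K) \<le> 1"
  using infdist_nonneg[of z K] by auto

lemma fK_cont: "continuous_on S (\<lambda>z. max 0 (1 - real n * infdist z K))"
  by (intro continuous_intros)

lemma T1:
  fixes F :: "(real \<times> real) measure" and K :: "(real \<times> real) set"
  assumes Fp: "finite_measure F" and sF: "sets F = sets (restrict_space borel S)" and Kc: "closed K" and K2: "K \<noteq> {}"
   and mi: "(indicator K :: _ \<Rightarrow> real) \<in> borel_measurable (restrict_space borel S)"
  shows "(\<lambda>n. integral\<^sup>L F (\<lambda>z. max 0 (1 - real n * infdist z K))) \<longlonglongrightarrow> integral\<^sup>L F (indicator K :: _ \<Rightarrow> real)"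
proof (rule integral_dominated_convergence[where w="\<lambda>_. 1"])
  interpret finite_measure F by fact
  show "(indicator K :: _ \<Rightarrow> real) \<in> borel_measurable F"
    unfolding measurable_cong_sets[OF sF refl] by (rule mi)
  show "(\<lambda>z. max 0 (1 - real n * infdist z K)) \<in> borel_measurable F" for n by (rule meas_cont[OF sF fK_cont])
  show "integrable F (\<lambda>_. 1::real)" by (rule integrable_const)
  show "AE x in F. (\<lambda>n. max 0 (1 - real n * infdist x K)) \<longlonglongrightarrow> indicator K x"
    by (rule AE_I2) (rule fK_lim[OF Kc K2])
  show "AE x in F. norm (max 0 (1 - real n * infdist x K)) \<le> 1" for n
    using fK_bounds[of n _ K] by (intro AE_I2) simp
qed

lemma H2:
  fixes F :: "(real \<times> real) measure"
  assumes F: "F \<in> prob_measures_on S" and S: "compact S" and G: "G > 0"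
    and hyp: "\<And>K n. compact K \<Longrightarrow> K \<noteq> {} \<Longrightarrow> K \<subseteq> S \<Longrightarrow>
       integral\<^sup>L F (\<lambda>z. max 0 (1 - real n * infdist z K))
         \<le> G * integral\<^sup>L (restrict_space lborel S) (\<lambda>z. max 0 (1 - real n * infdist z K))"
  shows "\<forall>B \<in> sets borel. B \<subseteq> S \<longrightarrow> emeasure F B \<le> ennreal G * emeasure lborel B"
proof -
  define L where "L = restrict_space lborel S"
  have Fp: "prob_space F" and spF: "space F = S" and sF: "sets F = sets (restrict_space borel S)"
    using F by (auto simp: prob_measures_on_def)
  interpret prob_space F by fact
  have finF: "finite_measure F" using Fp by (simp add: prob_space_def)
  have Sb: "S \<in> sets borel" using S by (simp add: compact_imp_closed borel_closed)
  have Sb': "S \<inter> space lborel \<in> sets lborel" using Sb by simp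
  have Sfin: "emeasure lborel S < \<infinity>" using S by (rule emeasure_compact_finite)
  have sL: "sets L = sets (restrict_space borel S)" unfolding L_def
    by (simp add: sets_restrict_space)
  have spL: "space L = S" unfolding L_def by (simp add: space_restrict_space)
  have finL: "finite_measure L"
    unfolding L_def by (rule finite_measureI) (use Sfin in \<open>simp add: space_restrict_space emeasure_restrict_space[OF Sb' order_refl]\<close>)
  interpret L: finite_measure L by fact
  have step1: "emeasure F K \<le> ennreal G * emeasure lborel K" if K: "compact K" "K \<noteq> {}" "K \<subseteq> S" for K
  proof -
    let ?f = "\<lambda>n z. max 0 (1 - real n * infdist z K)"
    have Kc: "closed K" using K by (simp add: compact_imp_closed)
    have Kb: "K \<in> sets borel" using Kc by (simp add: borel_closed)
    have KF: "K \<in> sets F" using Kb K(3) sF Sb by (simp add: sets_restrict_space_iff)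
    have KL: "K \<in> sets L" using Kb K(3) sL Sb by (simp add: sets_restrict_space_iff)
    have mi: "(indicator K :: _ \<Rightarrow> real) \<in> borel_measurable (restrict_space borel S)"
      by (rule measurable_restrict_space1) (use Kb in simp)
    have bnd: "norm (?f n z) \<le> 1" for n z using fK_bounds[of n z K] by simp
    have limF: "(\<lambda>n. integral\<^sup>L F (?f n)) \<longlonglongrightarrow> integral\<^sup>L F (indicator K :: _ \<Rightarrow> real)"
      by (rule T1[OF finF sF Kc K(2) mi])
    have limL: "(\<lambda>n. integral\<^sup>L L (?f n)) \<longlonglongrightarrow> integral\<^sup>L L (indicator K :: _ \<Rightarrow> real)"
      by (rule T1[OF finL sL Kc K(2) mi])
    have "integral\<^sup>L F (indicator K :: _ \<Rightarrow> real) \<le> G * integral\<^sup>L L (indicator K :: _ \<Rightarrow> real)"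
      by (rule LIMSEQ_le[OF limF tendsto_mult_left[OF limL]]) (use hyp[OF K] in \<open>auto simp: L_def\<close>)
    moreover have "integral\<^sup>L F (indicator K :: _ \<Rightarrow> real) = measure F K"
      using K(3) spF by (simp add: Int_absorb2)
    moreover have "integral\<^sup>L L (indicator K :: _ \<Rightarrow> real) = measure lborel K"
      using K(3) spL by (simp add: Int_absorb2 L_def measure_restrict_space[OF Sb'])
    ultimately have "measure F K \<le> G * measure lborel K" by simp
    moreover have "emeasure lborel K = ennreal (measure lborel K)"
      using emeasure_compact_finite[OF K(1)] by (simp add: emeasure_eq_ennreal_measure)
    ultimately show ?thesis
      using G by (simp add: emeasure_eq_measure ennreal_mult'[symmetric])
  qed
  define F' where "F' = distr F borel (\<lambda>x. x)"
  have idm: "(\<lambda>x. x) \<in> measurable F borel"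
  proof -
    have "(\<lambda>x. x) \<in> measurable (restrict_space borel S) borel"
      by (rule measurable_restrict_space1) (rule measurable_ident_sets, rule refl)
    then show ?thesis unfolding measurable_cong_sets[OF sF refl] .
  qed
  have eF': "emeasure F' A = emeasure F (A \<inter> S)" if "A \<in> sets borel" for A
    unfolding F'_def using emeasure_distr[OF idm that] spF by simp
  show ?thesis
  proof (intro ballI impI)
    fix B :: "(real \<times> real) set" assume B: "B \<in> sets borel" "B \<subseteq> S"
    have sF': "sets F' = sets borel" by (simp add: F'_def)
    have finF': "emeasure F' (space F') \<noteq> \<infinity>"
    proof -
      have "space F' = UNIV" by (simp add: F'_def)
      moreover have "emeasure F' UNIV = emeasure F (space F)" using eF'[of UNIV] spF by simp
      ultimately show ?thesis by simp
    qed
    have "emeasure F B = emeasure F' B" using eF'[OF B(1)] B(2) by (simp add: Int_absorb2)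
    also have "\<dots> = (SUP K \<in> {K. K \<subseteq> B \<and> compact K}. emeasure F' K)"
      by (rule inner_regular[OF sF' finF' B(1)])
    also have "\<dots> \<le> ennreal G * emeasure lborel B"
    proof (rule SUP_least)
      fix K assume K: "K \<in> {K. K \<subseteq> B \<and> compact K}"
      show "emeasure F' K \<le> ennreal G * emeasure lborel B"
      proof (cases "K = {}")
        case True then show ?thesis by simp
      next
        case False
        have Kb: "K \<in> sets borel" using K by (simp add: compact_imp_closed borel_closed)
        have "emeasure F' K = emeasure F K" using eF'[OF Kb] K B(2) by (auto simp: Int_absorb2)
        also have "\<dots> \<le> ennreal G * emeasure lborel K" using step1[of K] K B(2) False by auto
        also have "\<dots> \<le> ennreal G * emeasure lborel B"
          using K B by (intro mult_left_mono emeasure_mono) auto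
        finally show ?thesis .
      qed
    qed
    finally show "emeasure F B \<le> ennreal G * emeasure lborel B" .
  qed
qed

lemma char_cos_sin:
  assumes "real_distribution D"
  shows "char D t = Complex (integral\<^sup>L D (\<lambda>x. cos (t * x))) (integral\<^sup>L D (\<lambda>x. sin (t * x)))"
proof -
  interpret real_distribution D by fact
  have i: "integrable D (\<lambda>x. iexp (t * x))"
    by (rule integrable_iexp) auto
  have r: "Re (integral\<^sup>L D (\<lambda>x. iexp (t * x))) = integral\<^sup>L D (\<lambda>x. Re (iexp (t * x)))"
    by (rule integral_Re[OF i, symmetric])
  have m: "Im (integral\<^sup>L D (\<lambda>x. iexp (t * x))) = integral\<^sup>L D (\<lambda>x. Im (iexp (t * x)))"
    by (rule integral_Im[OF i, symmetric])
  have c: "Re (iexp y) = cos y" "Im (iexp y) = sin y" for y by (simp_all add: Re_exp Im_exp)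
  show ?thesis unfolding char_def
    by (rule complex_eqI) (simp_all only: r m c complex.sel)
qed

lemma snd_meas:
  assumes "sets F = sets (restrict_space borel S)"
  shows "snd \<in> measurable F (borel :: real measure)"
proof -
  have "snd \<in> measurable (restrict_space borel S) (borel :: real measure)"
    by (rule measurable_restrict_space1) (rule borel_measurable_continuous_onI, intro continuous_intros)
  then show ?thesis unfolding measurable_cong_sets[OF assms refl] .
qed

lemma fst_meas:
  assumes "sets F = sets (restrict_space borel S)"
  shows "fst \<in> measurable F (borel :: real measure)"
proof -
  have "fst \<in> measurable (restrict_space borel S) (borel :: real measure)"
    by (rule measurable_restrict_space1) (rule borel_measurable_continuous_onI, intro continuous_intros)
  then show ?thesis unfolding measurable_cong_sets[OF assms refl] .
qed

lemma H3:
  fixes F m :: "(real \<times> real) measure" and X Td Ta :: "real set"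
  assumes F: "F \<in> prob_measures_on (Td \<times> X)" and m: "prob_space m" "space m = X \<times> Ta"
     "sets m = sets (restrict_space borel (X \<times> Ta))" and X: "X \<in> sets borel"
  shows "(\<forall>B \<in> sets borel. B \<subseteq> X \<longrightarrow> emeasure F (Td \<times> B) = emeasure m (B \<times> Ta)) \<longleftrightarrow>
    (\<forall>t. integral\<^sup>L F (\<lambda>z. cos (t * snd z)) = integral\<^sup>L m (\<lambda>z. cos (t * fst z)) \<and>
         integral\<^sup>L F (\<lambda>z. sin (t * snd z)) = integral\<^sup>L m (\<lambda>z. sin (t * fst z)))"
proof -
  have Fp: "prob_space F" and spF: "space F = Td \<times> X" and sF: "sets F = sets (restrict_space borel (Td \<times> X))"
    using F by (auto simp: prob_measures_on_def)
  define D1 where "D1 = distr F borel snd"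
  define D2 where "D2 = distr m borel fst"
  have ms: "snd \<in> measurable F (borel :: real measure)" by (rule snd_meas[OF sF])
  have mf: "fst \<in> measurable m (borel :: real measure)" by (rule fst_meas[OF m(3)])
  have rd1: "real_distribution D1"
    unfolding real_distribution_def real_distribution_axioms_def D1_def
    using prob_space.prob_space_distr[OF Fp ms] by simp
  have rd2: "real_distribution D2"
    unfolding real_distribution_def real_distribution_axioms_def D2_def
    using prob_space.prob_space_distr[OF m(1) mf] by simp
  have e1: "emeasure D1 A = emeasure F (Td \<times> (A \<inter> X))" if "A \<in> sets borel" for A
  proof -
    have "snd -` A \<inter> space F = Td \<times> (A \<inter> X)" using spF by auto
    then show ?thesis unfolding D1_def using emeasure_distr[OF ms that] by simp
  qed
  have e2: "emeasure D2 A = emeasure m ((A \<inter> X) \<times> Ta)" if "A \<in> sets borel" for A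
  proof -
    have "fst -` A \<inter> space m = (A \<inter> X) \<times> Ta" using m(2) by auto
    then show ?thesis unfolding D2_def using emeasure_distr[OF mf that] by simp
  qed
  have iF: "integral\<^sup>L F (\<lambda>z. g (snd z)) = integral\<^sup>L D1 g" if "g \<in> borel_measurable borel" for g :: "real \<Rightarrow> real"
    unfolding D1_def by (rule integral_distr[OF ms that, symmetric])
  have im: "integral\<^sup>L m (\<lambda>z. g (fst z)) = integral\<^sup>L D2 g" if "g \<in> borel_measurable borel" for g :: "real \<Rightarrow> real"
    unfolding D2_def by (rule integral_distr[OF mf that, symmetric])
  have cm: "(\<lambda>x. cos (t * x)) \<in> borel_measurable borel" for t :: real
    by (rule borel_measurable_continuous_onI, intro continuous_intros)
  have sm: "(\<lambda>x. sin (t * x)) \<in> borel_measurable borel" for t :: real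
    by (rule borel_measurable_continuous_onI, intro continuous_intros)
  have "(\<forall>B \<in> sets borel. B \<subseteq> X \<longrightarrow> emeasure F (Td \<times> B) = emeasure m (B \<times> Ta)) \<longleftrightarrow> D1 = D2"
  proof
    assume H: "\<forall>B \<in> sets borel. B \<subseteq> X \<longrightarrow> emeasure F (Td \<times> B) = emeasure m (B \<times> Ta)"
    show "D1 = D2"
    proof (rule measure_eqI)
      show "sets D1 = sets D2" by (simp add: D1_def D2_def)
      fix A assume "A \<in> sets D1"
      then have A: "A \<in> sets borel" by (simp add: D1_def)
      show "emeasure D1 A = emeasure D2 A" using e1[OF A] e2[OF A] H X A by auto
    qed
  next
    assume "D1 = D2"
    then show "\<forall>B \<in> sets borel. B \<subseteq> X \<longrightarrow> emeasure F (Td \<times> B) = emeasure m (B \<times> Ta)"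
      using e1 e2 by (metis Int_absorb2)
  qed
  also have "\<dots> \<longleftrightarrow> (\<forall>t. integral\<^sup>L F (\<lambda>z. cos (t * snd z)) = integral\<^sup>L m (\<lambda>z. cos (t * fst z)) \<and>
         integral\<^sup>L F (\<lambda>z. sin (t * snd z)) = integral\<^sup>L m (\<lambda>z. sin (t * fst z)))"
  proof
    assume "D1 = D2"
    then show "\<forall>t. integral\<^sup>L F (\<lambda>z. cos (t * snd z)) = integral\<^sup>L m (\<lambda>z. cos (t * fst z)) \<and>
         integral\<^sup>L F (\<lambda>z. sin (t * snd z)) = integral\<^sup>L m (\<lambda>z. sin (t * fst z))"
      using iF[OF cm] im[OF cm] iF[OF sm] im[OF sm] by simp
  next
    assume H: "\<forall>t. integral\<^sup>L F (\<lambda>z. cos (t * snd z)) = integral\<^sup>L m (\<lambda>z. cos (t * fst z)) \<and>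
         integral\<^sup>L F (\<lambda>z. sin (t * snd z)) = integral\<^sup>L m (\<lambda>z. sin (t * fst z))"
    have "char D1 = char D2"
    proof
      fix t
      show "char D1 t = char D2 t"
        unfolding char_cos_sin[OF rd1] char_cos_sin[OF rd2]
        using H iF[OF cm] im[OF cm] iF[OF sm] im[OF sm] by simp
    qed
    then show "D1 = D2" by (rule Levy_uniqueness[OF rd1 rd2])
  qed
  finally show ?thesis .
qed

theorem proposition3:
  fixes Tmax Xmin Xmax G :: real
    and Td Ta :: "real set"
    and m :: "(real \<times> real) measure"
  assumes "compact Td" and "Td \<subseteq> {0..Tmax}"
    and "compact Ta" and "Ta \<subseteq> {0..Tmax}"
    and "prob_space m"
    and "space m = {Xmin..Xmax} \<times> Ta"
    and "sets m = sets (restrict_space borel ({Xmin..Xmax} \<times> Ta))"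
    and "G > 0"
  shows "closedin (weak_topology_on (Td \<times> {Xmin..Xmax})) (P_mG Td {Xmin..Xmax} Ta m G)"
proof -
  define X where "X = {Xmin..Xmax}"
  define S where "S = Td \<times> X"
  have Sc: "compact S" unfolding S_def X_def using assms(1) by (intro compact_Times compact_Icc)
  have Sb: "S \<in> sets borel" using Sc by (simp add: compact_imp_closed borel_closed)
  have Sfin: "emeasure lborel S < \<infinity>" using Sc by (rule emeasure_compact_finite)
  have Xb: "X \<in> sets borel" unfolding X_def by simp
  define Q1 :: "((real \<times> real \<Rightarrow> real) \<times> real set) set" where
    "Q1 = {((\<lambda>z. max 0 (1 - real n * infdist z K)),
            {..G * integral\<^sup>L (restrict_space lborel S) (\<lambda>z. max 0 (1 - real n * infdist z K))}) | K n.
            compact K \<and> K \<noteq> {} \<and> K \<subseteq> S}"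
  define Q2 :: "((real \<times> real \<Rightarrow> real) \<times> real set) set" where
    "Q2 = range (\<lambda>t. ((\<lambda>z. cos (t * snd z)), {integral\<^sup>L m (\<lambda>z. cos (t * fst z))}))"
  define Q3 :: "((real \<times> real \<Rightarrow> real) \<times> real set) set" where
    "Q3 = range (\<lambda>t. ((\<lambda>z. sin (t * snd z)), {integral\<^sup>L m (\<lambda>z. sin (t * fst z))}))"
  have Qok: "continuous_on S f \<and> bounded (f ` S) \<and> closed C" if "(f,C) \<in> Q1 \<union> Q2 \<union> Q3" for f C
  proof -
    have b1: "bounded A" if "A \<subseteq> {-1..1::real}" for A
      using bounded_subset[OF compact_imp_bounded[OF compact_Icc] that] .
    show ?thesis using that
    proof (elim UnE)
      assume "(f,C) \<in> Q1"
      then obtain K n where f: "f = (\<lambda>z. max 0 (1 - real n * infdist z K))" and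
        C: "C = {..G * integral\<^sup>L (restrict_space lborel S) (\<lambda>z. max 0 (1 - real n * infdist z K))}"
        unfolding Q1_def by blast
      have "f ` S \<subseteq> {-1..1}" unfolding f
      proof (rule image_subsetI)
        fix z show "max 0 (1 - real n * infdist z K) \<in> {-1..1}" using fK_bounds[of n z K] by simp
      qed
      then show ?thesis using f C fK_cont b1 by auto
    next
      assume "(f,C) \<in> Q2"
      then obtain t where f: "f = (\<lambda>z. cos (t * snd z))" and C: "C = {integral\<^sup>L m (\<lambda>z. cos (t * fst z))}"
        unfolding Q2_def by blast
      have "f ` S \<subseteq> {-1..1}" using f by auto
      moreover have "continuous_on S f" unfolding f by (intro continuous_intros)
      ultimately show ?thesis using C b1 by auto
    next
      assume "(f,C) \<in> Q3"
      then obtain t where f: "f = (\<lambda>z. sin (t * snd z))" and C: "C = {integral\<^sup>L m (\<lambda>z. sin (t * fst z))}"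
        unfolding Q3_def by blast
      have "f ` S \<subseteq> {-1..1}" using f by auto
      moreover have "continuous_on S f" unfolding f by (intro continuous_intros)
      ultimately show ?thesis using C b1 by auto
    qed
  qed
  have m2: "space m = X \<times> Ta" and m3: "sets m = sets (restrict_space borel (X \<times> Ta))"
    using assms(6,7) unfolding X_def by auto
  have eq: "P_mG Td X Ta m G = {F \<in> prob_measures_on S. \<forall>(f,C)\<in>Q1 \<union> Q2 \<union> Q3. (\<integral>z. f z \<partial>F) \<in> C}"
  proof (intro set_eqI iffI)
    fix F assume F: "F \<in> P_mG Td X Ta m G"
    then have Fp: "F \<in> prob_measures_on S"
      and c1: "\<forall>B \<in> sets borel. B \<subseteq> S \<longrightarrow> emeasure F B \<le> ennreal G * emeasure lborel B"
      and c2: "\<forall>B \<in> sets borel. B \<subseteq> X \<longrightarrow> emeasure F (Td \<times> B) = emeasure m (B \<times> Ta)"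
      unfolding P_mG_def S_def by auto
    have h3: "\<forall>t. integral\<^sup>L F (\<lambda>z. cos (t * snd z)) = integral\<^sup>L m (\<lambda>z. cos (t * fst z)) \<and>
         integral\<^sup>L F (\<lambda>z. sin (t * snd z)) = integral\<^sup>L m (\<lambda>z. sin (t * fst z))"
      using H3[OF Fp[unfolded S_def] assms(5) m2 m3 Xb] c2 by (rule iffD1)
    have "\<forall>(f,C)\<in>Q1 \<union> Q2 \<union> Q3. (\<integral>z. f z \<partial>F) \<in> C"
    proof safe
      fix f C assume "(f,C) \<in> Q1"
      then obtain K n where f: "f = (\<lambda>z. max 0 (1 - real n * infdist z K))" and
        C: "C = {..G * integral\<^sup>L (restrict_space lborel S) (\<lambda>z. max 0 (1 - real n * infdist z K))}"
        unfolding Q1_def by blast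
      show "(\<integral>z. f z \<partial>F) \<in> C" unfolding f C
        using H1[OF Fp Sb Sfin c1 assms(8) fK_cont fK_bounds] by simp
    next
      fix f C assume "(f,C) \<in> Q2"
      then show "(\<integral>z. f z \<partial>F) \<in> C" using h3 unfolding Q2_def by auto
    next
      fix f C assume "(f,C) \<in> Q3"
      then show "(\<integral>z. f z \<partial>F) \<in> C" using h3 unfolding Q3_def by auto
    qed
    then show "F \<in> {F \<in> prob_measures_on S. \<forall>(f,C)\<in>Q1 \<union> Q2 \<union> Q3. (\<integral>z. f z \<partial>F) \<in> C}"
      using Fp by blast
  next
    fix F assume "F \<in> {F \<in> prob_measures_on S. \<forall>(f,C)\<in>Q1 \<union> Q2 \<union> Q3. (\<integral>z. f z \<partial>F) \<in> C}"
    then have Fp: "F \<in> prob_measures_on S" and H0: "\<forall>(f,C)\<in>Q1 \<union> Q2 \<union> Q3. (\<integral>z. f z \<partial>F) \<in> C"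
      by auto
    have H: "(\<integral>z. f z \<partial>F) \<in> C" if "(f,C) \<in> Q1 \<union> Q2 \<union> Q3" for f C
      using H0 that by auto
    have c1: "\<forall>B \<in> sets borel. B \<subseteq> S \<longrightarrow> emeasure F B \<le> ennreal G * emeasure lborel B"
    proof (rule H2[OF Fp Sc assms(8)])
      fix K :: "(real \<times> real) set" and n :: nat assume K: "compact K" "K \<noteq> {}" "K \<subseteq> S"
      then have "((\<lambda>z. max 0 (1 - real n * infdist z K)),
            {..G * integral\<^sup>L (restrict_space lborel S) (\<lambda>z. max 0 (1 - real n * infdist z K))}) \<in> Q1"
        unfolding Q1_def by blast
      then have "integral\<^sup>L F (\<lambda>z. max 0 (1 - real n * infdist z K)) \<in>
            {..G * integral\<^sup>L (restrict_space lborel S) (\<lambda>z. max 0 (1 - real n * infdist z K))}"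
        by (rule H[OF UnI1[OF UnI1]])
      then show "integral\<^sup>L F (\<lambda>z. max 0 (1 - real n * infdist z K))
         \<le> G * integral\<^sup>L (restrict_space lborel S) (\<lambda>z. max 0 (1 - real n * infdist z K))"
        by simp
    qed
    have h3: "\<forall>t. integral\<^sup>L F (\<lambda>z. cos (t * snd z)) = integral\<^sup>L m (\<lambda>z. cos (t * fst z)) \<and>
         integral\<^sup>L F (\<lambda>z. sin (t * snd z)) = integral\<^sup>L m (\<lambda>z. sin (t * fst z))"
    proof
      fix t
      have q2: "((\<lambda>z. cos (t * snd z)), {integral\<^sup>L m (\<lambda>z. cos (t * fst z))}) \<in> Q2" unfolding Q2_def by blast
      have q3: "((\<lambda>z. sin (t * snd z)), {integral\<^sup>L m (\<lambda>z. sin (t * fst z))}) \<in> Q3" unfolding Q3_def by blast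
      have "integral\<^sup>L F (\<lambda>z. cos (t * snd z)) \<in> {integral\<^sup>L m (\<lambda>z. cos (t * fst z))}"
        "integral\<^sup>L F (\<lambda>z. sin (t * snd z)) \<in> {integral\<^sup>L m (\<lambda>z. sin (t * fst z))}"
        by (rule H[OF UnI1[OF UnI2[OF q2]]], rule H[OF UnI2[OF q3]])
      then show "integral\<^sup>L F (\<lambda>z. cos (t * snd z)) = integral\<^sup>L m (\<lambda>z. cos (t * fst z)) \<and>
         integral\<^sup>L F (\<lambda>z. sin (t * snd z)) = integral\<^sup>L m (\<lambda>z. sin (t * fst z))"
        by simp
    qed
    have c2: "\<forall>B \<in> sets borel. B \<subseteq> X \<longrightarrow> emeasure F (Td \<times> B) = emeasure m (B \<times> Ta)"
      using H3[OF Fp[unfolded S_def] assms(5) m2 m3 Xb] h3 by (rule iffD2)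
    show "F \<in> P_mG Td X Ta m G" using Fp c1 c2 unfolding P_mG_def S_def by blast
  qed
  show ?thesis
    using closed_weak_generic[of "Q1 \<union> Q2 \<union> Q3" S, OF Qok] eq unfolding S_def X_def by simp
qed

end
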